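(* For $n\in \mathbb N_{0}$, \begin{align*} H_{n+1}^{(2)}&=\sum_{j=0}^{n}\binom{n+1}{j+1}\frac{(-1)^{j}}{(j+1)^2} -\sum_{k=0}^{n-1}\frac{1}{k+2}\sum_{j=0}^{k}\binom{k+1}{j+1}\frac{(-1)^{j}}{j+1}\,,\\ H_{n+1}^{(3)}&=\sum_{j=0}^{n}\binom{n+1}{j+1}\frac{(-1)^{j}}{(j+1)^3} -\sum_{j=0}^{n-1}\frac{1}{(j+2)^2}\sum_{\ell=0}^{j}\binom{j+1}{\ell+1}\frac{(-1)^{\ell}}{\ell+1} -\sum_{j=0}^{n-1}\frac{1}{j+2}\sum_{\ell=0}^{j}\binom{j+1}{\ell+1}\frac{(-1)^{\ell}}{(\ell+1)^2}\,. \end{align*}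
   Context: $H_n^{(q)}=\sum_{j=1}^n j^{-q}$ for $q\in\mathbb N$; empty sums are $0$. *)

theory Defs
  imports Complex_Main
begin

definition gen_harm :: "nat \<Rightarrow> nat \<Rightarrow> real" where
  "gen_harm q n = (\<Sum>j=1..n. 1 / (real j) ^ q)"

end

theory Submission imports Defs begin

definition S :: "nat \<Rightarrow> nat \<Rightarrow> real" where
  "S m q = (\<Sum>j<m. real (m choose (j+1)) * (-1)^j / (real j + 1)^q)"

lemma S0: "S (Suc k) 0 = 1"
proof -
  have "(\<Sum>i\<le>Suc k. (-1)^i * real (Suc k choose i)) = 0"
    by (rule choose_alternating_sum) simp
  also have "(\<Sum>i\<le>Suc k. (-1)^i * real (Suc k choose i)) = 1 + (\<Sum>i\<le>k. (-1)^(Suc i) * real (Suc k choose Suc i))"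
    by (subst sum.atMost_Suc_shift) simp
  finally have "(\<Sum>i\<le>k. (-1)^i * real (Suc k choose Suc i)) = 1"
    by (simp add: sum_negf)
  then show ?thesis unfolding S_def by (simp add: lessThan_Suc_atMost mult.commute)
qed

lemma Srec: "S (Suc m) (Suc q) = S m (Suc q) + S (Suc m) q / (real m + 1)"
proof -
  have "S (Suc m) (Suc q) = (\<Sum>j<Suc m. real (m choose (j+1)) * (-1)^j / (real j + 1)^Suc q)
     + (\<Sum>j<Suc m. real (m choose j) * (-1)^j / (real j + 1)^Suc q)"
    unfolding S_def sum.distrib[symmetric]
    by (rule sum.cong) (auto simp: add_divide_distrib distrib_right)
  also have "(\<Sum>j<Suc m. real (m choose (j+1)) * (-1)^j / (real j + 1)^Suc q) = S m (Suc q)"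
    unfolding S_def by simp
  also have "(\<Sum>j<Suc m. real (m choose j) * (-1)^j / (real j + 1)^Suc q)
      = (\<Sum>j<Suc m. (real (Suc m choose Suc j) * (-1)^j / (real j + 1)^q) / (real m + 1))"
  proof (rule sum.cong[OF refl])
    fix j
    have e: "real (Suc j) * real (Suc m choose Suc j) = real (Suc m) * real (m choose j)"
      using Suc_times_binomial[of j m] by (metis of_nat_mult)
    define c where "c = real (Suc m choose Suc j)"
    have ee: "real (m choose j) = real (Suc j) * c / (real m + 1)"
      using e unfolding c_def by (simp add: field_simps del: binomial_Suc_Suc)
    have "real (m choose j) * (-1)^j / (real j + 1)^Suc q
      = (c * (-1)^j / (real j + 1)^q) / (real m + 1)"
    proof -
      have nz: "real j + 1 \<noteq> 0" "real m + 1 \<noteq> 0" by simp_all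
      have "real (m choose j) * (-1)^j / (real j + 1)^Suc q
          = ((real j + 1) * (c * (-1)^j)) / ((real j + 1) * ((real j + 1)^q * (real m + 1)))"
        unfolding ee using nz by (simp add: field_simps)
      also have "\<dots> = (c * (-1)^j) / ((real j + 1)^q * (real m + 1))"
        using nz(1) by (rule mult_divide_mult_cancel_left)
      finally show ?thesis by simp
    qed
    then show "real (m choose j) * (-1)^j / (real j + 1)^Suc q
      = (real (Suc m choose Suc j) * (-1)^j / (real j + 1)^q) / (real m + 1)"
      unfolding c_def .
  qed
  also have "\<dots> = S (Suc m) q / (real m + 1)"
    unfolding S_def sum_divide_distrib Suc_eq_plus1 by (rule refl)
  finally show ?thesis .
qed

lemma S1: "S (Suc (Suc m)) 1 = S (Suc m) 1 + 1 / (real m + 2)"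
  using Srec[of "Suc m" 0] S0[of "Suc m"] by (simp add: add.commute)

lemma GH: "gen_harm q (Suc m) = gen_harm q m + 1 / (real m + 1)^q"
  unfolding gen_harm_def by (simp add: add.commute)

lemma main:
  "gen_harm 2 (n+1) = S (n+1) 2 - (\<Sum>k<n. 1 / (real k + 2) * S (k+1) 1)
   \<and> gen_harm 3 (n+1) = S (n+1) 3 - (\<Sum>j<n. 1 / (real j + 2)^2 * S (j+1) 1)
       - (\<Sum>j<n. 1 / (real j + 2) * S (j+1) 2)"
proof (induction n)
  case 0
  then show ?case by (simp add: gen_harm_def S_def)
next
  case (Suc n)
  have r2: "S (Suc (Suc n)) 2 = S (Suc n) 2 + S (Suc (Suc n)) 1 / (real n + 2)"
    using Srec[of "Suc n" 1] by (simp add: numeral_2_eq_2 add.commute)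
  have r3: "S (Suc (Suc n)) 3 = S (Suc n) 3 + S (Suc (Suc n)) 2 / (real n + 2)"
    using Srec[of "Suc n" 2] by (simp add: numeral_3_eq_3 numeral_2_eq_2 add.commute)
  have g2: "gen_harm 2 (Suc (Suc n)) = gen_harm 2 (Suc n) + 1 / (real n + 2)^2"
    using GH[of 2 "Suc n"] by (simp add: add.commute)
  have g3: "gen_harm 3 (Suc (Suc n)) = gen_harm 3 (Suc n) + 1 / (real n + 2)^3"
    using GH[of 3 "Suc n"] by (simp add: add.commute)
  have p: "real n + 2 \<noteq> 0" by simp
  have alg: "\<And>(x::real) G2 G2' G3 G3' S1 S1' S2 S2' S3 S3' A B C.
    x \<noteq> 0 \<Longrightarrow> G2 = S2 - A \<and> G3 = S3 - B - C \<Longrightarrow> S2' = S2 + S1' / x \<Longrightarrow>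
    S3' = S3 + S2' / x \<Longrightarrow> G2' = G2 + 1 / x^2 \<Longrightarrow> G3' = G3 + 1 / x^3 \<Longrightarrow>
    S1' = S1 + 1 / x \<Longrightarrow>
    G2' = S2' - (A + 1 / x * S1) \<and> G3' = S3' - (B + 1 / x^2 * S1) - (C + 1 / x * S2)"
  proof -
    fix x G2 G2' G3 G3' S1 S1' S2 S2' S3 S3' A B C :: real
    assume h: "x \<noteq> 0" "G2 = S2 - A \<and> G3 = S3 - B - C" "S2' = S2 + S1' / x"
      "S3' = S3 + S2' / x" "G2' = G2 + 1 / x^2" "G3' = G3 + 1 / x^3" "S1' = S1 + 1 / x"
    have a: "G2' = S2' - (A + 1 / x * S1)"
      unfolding h(5) h(3) h(7) h(2)[THEN conjunct1] using h(1)
      by (simp add: field_simps power2_eq_square)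
    have b: "G3' = S3' - (B + 1 / x^2 * S1) - (C + 1 / x * S2)"
      unfolding h(6) h(4) h(3) h(7) h(2)[THEN conjunct2] using h(1)
      by (simp add: field_simps power2_eq_square power3_eq_cube)
    show "G2' = S2' - (A + 1 / x * S1) \<and> G3' = S3' - (B + 1 / x^2 * S1) - (C + 1 / x * S2)"
      using a b by simp
  qed
  show ?case
    unfolding sum.lessThan_Suc
    using alg[OF p Suc.IH[simplified] r2 r3 g2 g3 S1[of n]]
    by (simp add: add.commute)
qed

theorem proposition3:
  fixes n :: nat
  shows "(gen_harm 2 (n+1) =
           (\<Sum>j=0..n. real ((n+1) choose (j+1)) * (-1)^j / (real j + 1)^2)
         - (\<Sum>k<n. 1 / (real k + 2) * (\<Sum>j=0..k. real ((k+1) choose (j+1)) * (-1)^j / (real j + 1))))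
    \<and> (gen_harm 3 (n+1) =
           (\<Sum>j=0..n. real ((n+1) choose (j+1)) * (-1)^j / (real j + 1)^3)
         - (\<Sum>j<n. 1 / (real j + 2)^2 * (\<Sum>l=0..j. real ((j+1) choose (l+1)) * (-1)^l / (real l + 1)))
         - (\<Sum>j<n. 1 / (real j + 2) * (\<Sum>l=0..j. real ((j+1) choose (l+1)) * (-1)^l / (real l + 1)^2)))"
proof -
  have e: "S (Suc k) q = (\<Sum>j=0..k. real (Suc k choose Suc j) * (-1)^j / (real j + 1)^q)" for k q
    unfolding S_def by (simp add: atLeast0AtMost lessThan_Suc_atMost)
  show ?thesis using main[of n] by (simp add: e)
qed
end
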